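(* Let $T$ be a theory extending $\mathsf{ACA}_0$ and let $\alpha$ be a primitive recursive well-ordering with $\mathrm{otyp}(\alpha)<|T|_{\mathsf{WF}}$. Then $T\vdash^{\Sigma^1_1}\mathsf{WF}(\alpha)$.
   Context: A theory is a set of sentences of the language of second-order arithmetic; $T+\psi$ denotes $T\cup\{\psi\}$. $\mathrm{otyp}$ denotes order type. For primitive recursive $\prec$, $\mathsf{WF}(\prec):=\forall X(\exists x\in X\to\exists x\in X\,\forall y\in X\,\neg(y\prec x))$; $|T|_{\mathsf{WF}}$ is the supremum of the order types of primitive recursive presentations $\prec$ of well-orderings with $T\vdash\mathsf{WF}(\prec)$. $T\vdash^{\Sigma^1_1}\varphi$ means there is a true (in the standard model) $\Sigma^1_1$ sentence $\psi$ with $T+\psi\vdash\varphi$. *)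

theory Defs
  imports Main
begin

datatype prc = PZero | PSucc | PProj nat nat | PComp prc "prc list" | PRec prc prc

text \<open>Standard semantics of a code (junk values on arity mismatch are irrelevant).\<close>
primrec peval :: "prc \<Rightarrow> nat list \<Rightarrow> nat" where
  "peval PZero xs = 0"
| "peval PSucc xs = (case xs of [] \<Rightarrow> 0 | x # _ \<Rightarrow> Suc x)"
| "peval (PProj n i) xs = xs ! i"
| "peval (PComp f gs) xs = peval f (map (\<lambda>g. peval g xs) gs)"
| "peval (PRec g h) xs = (case xs of [] \<Rightarrow> 0
     | x # ys \<Rightarrow> rec_nat (peval g ys) (\<lambda>k r. peval h (k # r # ys)) x)"

fun arity_ok :: "prc \<Rightarrow> nat \<Rightarrow> bool" where
  "arity_ok PZero n = (n = 0)"
| "arity_ok PSucc n = (n = 1)"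
| "arity_ok (PProj m i) n = (n = m \<and> i < m)"
| "arity_ok (PComp f gs) n = (arity_ok f (length gs) \<and> (\<forall>g\<in>set gs. arity_ok g n))"
| "arity_ok (PRec g h) n = (0 < n \<and> arity_ok g (n - 1) \<and> arity_ok h (Suc n))"

section \<open>Language of second-order arithmetic (de Bruijn indices, two sorts)\<close>

datatype trm = Var nat | Fn prc "trm list"

text \<open>Mem t j : t is an element of the set variable with index j.\<close>
datatype fm = Fls | Eq trm trm | Mem trm nat | Imp fm fm | All fm | SAll fm

definition Neg :: "fm \<Rightarrow> fm" where "Neg p = Imp p Fls"
definition Or :: "fm \<Rightarrow> fm \<Rightarrow> fm" where "Or p q = Imp (Neg p) q"
definition And :: "fm \<Rightarrow> fm \<Rightarrow> fm" where "And p q = Neg (Imp p (Neg q))"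
definition Iff :: "fm \<Rightarrow> fm \<Rightarrow> fm" where "Iff p q = And (Imp p q) (Imp q p)"
definition Ex :: "fm \<Rightarrow> fm" where "Ex p = Neg (All (Neg p))"
definition SEx :: "fm \<Rightarrow> fm" where "SEx p = Neg (SAll (Neg p))"

definition zero :: trm where "zero = Fn PZero []"
definition succ :: "trm \<Rightarrow> trm" where "succ t = Fn PSucc [t]"

primrec liftt :: "nat \<Rightarrow> trm \<Rightarrow> trm" where
  "liftt k (Var i) = Var (if i < k then i else Suc i)"
| "liftt k (Fn f ts) = Fn f (map (liftt k) ts)"

primrec liftf :: "nat \<Rightarrow> fm \<Rightarrow> fm" where
  "liftf k Fls = Fls"
| "liftf k (Eq t s) = Eq (liftt k t) (liftt k s)"
| "liftf k (Mem t j) = Mem (liftt k t) j"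
| "liftf k (Imp p q) = Imp (liftf k p) (liftf k q)"
| "liftf k (All p) = All (liftf (Suc k) p)"
| "liftf k (SAll p) = SAll (liftf k p)"

primrec liftS :: "nat \<Rightarrow> fm \<Rightarrow> fm" where
  "liftS k Fls = Fls"
| "liftS k (Eq t s) = Eq t s"
| "liftS k (Mem t j) = Mem t (if j < k then j else Suc j)"
| "liftS k (Imp p q) = Imp (liftS k p) (liftS k q)"
| "liftS k (All p) = All (liftS k p)"
| "liftS k (SAll p) = SAll (liftS (Suc k) p)"

primrec substt :: "nat \<Rightarrow> trm \<Rightarrow> trm \<Rightarrow> trm" where
  "substt k s (Var i) = (if i < k then Var i else if i = k then s else Var (i - 1))"
| "substt k s (Fn f ts) = Fn f (map (substt k s) ts)"

primrec substf :: "nat \<Rightarrow> trm \<Rightarrow> fm \<Rightarrow> fm" where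
  "substf k s Fls = Fls"
| "substf k s (Eq t u) = Eq (substt k s t) (substt k s u)"
| "substf k s (Mem t j) = Mem (substt k s t) j"
| "substf k s (Imp p q) = Imp (substf k s p) (substf k s q)"
| "substf k s (All p) = All (substf (Suc k) (liftt 0 s) p)"
| "substf k s (SAll p) = SAll (substf k s p)"

primrec substS :: "nat \<Rightarrow> nat \<Rightarrow> fm \<Rightarrow> fm" where
  "substS k j Fls = Fls"
| "substS k j (Eq t u) = Eq t u"
| "substS k j (Mem t i) = Mem t (if i < k then i else if i = k then j else i - 1)"
| "substS k j (Imp p q) = Imp (substS k j p) (substS k j q)"
| "substS k j (All p) = All (substS k j p)"
| "substS k j (SAll p) = SAll (substS (Suc k) (Suc j) p)"

primrec tfree_below :: "nat \<Rightarrow> trm \<Rightarrow> bool" where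
  "tfree_below k (Var i) = (i < k)"
| "tfree_below k (Fn f ts) = list_all (tfree_below k) ts"

primrec nfree_below :: "nat \<Rightarrow> fm \<Rightarrow> bool" where
  "nfree_below k Fls = True"
| "nfree_below k (Eq t s) = (tfree_below k t \<and> tfree_below k s)"
| "nfree_below k (Mem t j) = tfree_below k t"
| "nfree_below k (Imp p q) = (nfree_below k p \<and> nfree_below k q)"
| "nfree_below k (All p) = nfree_below (Suc k) p"
| "nfree_below k (SAll p) = nfree_below k p"

primrec sfree_below :: "nat \<Rightarrow> fm \<Rightarrow> bool" where
  "sfree_below k Fls = True"
| "sfree_below k (Eq t s) = True"
| "sfree_below k (Mem t j) = (j < k)"
| "sfree_below k (Imp p q) = (sfree_below k p \<and> sfree_below k q)"
| "sfree_below k (All p) = sfree_below k p"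
| "sfree_below k (SAll p) = sfree_below (Suc k) p"

definition sentence :: "fm \<Rightarrow> bool" where
  "sentence p \<longleftrightarrow> nfree_below 0 p \<and> sfree_below 0 p"

primrec arith :: "fm \<Rightarrow> bool" where
  "arith Fls = True"
| "arith (Eq t s) = True"
| "arith (Mem t j) = True"
| "arith (Imp p q) = (arith p \<and> arith q)"
| "arith (All p) = arith p"
| "arith (SAll p) = False"

definition sigma11 :: "fm \<Rightarrow> bool" where
  "sigma11 p \<longleftrightarrow> (\<exists>n q. arith q \<and> p = (SEx ^^ n) q)"

primrec evt :: "(nat \<Rightarrow> nat) \<Rightarrow> trm \<Rightarrow> nat" where
  "evt e (Var i) = e i"
| "evt e (Fn f ts) = peval f (map (evt e) ts)"

primrec sat :: "(nat \<Rightarrow> nat) \<Rightarrow> (nat \<Rightarrow> nat set) \<Rightarrow> fm \<Rightarrow> bool" where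
  "sat e S Fls = False"
| "sat e S (Eq t s) = (evt e t = evt e s)"
| "sat e S (Mem t j) = (evt e t \<in> S j)"
| "sat e S (Imp p q) = (sat e S p \<longrightarrow> sat e S q)"
| "sat e S (All p) = (\<forall>n. sat (case_nat n e) S p)"
| "sat e S (SAll p) = (\<forall>X. sat e (case_nat X S) p)"

definition std_true :: "fm \<Rightarrow> bool" where
  "std_true p \<longleftrightarrow> sat (\<lambda>_. 0) (\<lambda>_. {}) p"

text \<open>prv H p: p is derivable from the hypotheses H (intended: a set of sentences).\<close>
inductive prv :: "fm set \<Rightarrow> fm \<Rightarrow> bool" for H :: "fm set" where
  hyp: "p \<in> H \<Longrightarrow> prv H p"
| ax1: "prv H (Imp p (Imp q p))"
| ax2: "prv H (Imp (Imp p (Imp q r)) (Imp (Imp p q) (Imp p r)))"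
| ax3: "prv H (Imp (Neg (Neg p)) p)"
| mp: "prv H (Imp p q) \<Longrightarrow> prv H p \<Longrightarrow> prv H q"
| eq_refl: "prv H (Eq t t)"
| eq_subst: "prv H (Imp (Eq t s) (Imp (substf 0 t p) (substf 0 s p)))"
| all_inst: "prv H (Imp (All p) (substf 0 t p))"
| all_dist: "prv H (Imp (All (Imp (liftf 0 q) p)) (Imp q (All p)))"
| gen: "prv H p \<Longrightarrow> prv H (All p)"
| sall_inst: "prv H (Imp (SAll p) (substS 0 j p))"
| sall_dist: "prv H (Imp (SAll (Imp (liftS 0 q) p)) (Imp q (SAll p)))"
| sgen: "prv H p \<Longrightarrow> prv H (SAll p)"

definition vars :: "nat \<Rightarrow> trm list" where "vars n = map Var [0..<n]"

inductive aca_base :: "fm \<Rightarrow> bool" where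
  succ_ne: "aca_base (Neg (Eq (succ (Var 0)) zero))"
| succ_inj: "aca_base (Imp (Eq (succ (Var 0)) (succ (Var 1))) (Eq (Var 0) (Var 1)))"
| proj: "i < n \<Longrightarrow> aca_base (Eq (Fn (PProj n i) (vars n)) (Var i))"
| comp: "arity_ok (PComp f gs) m \<Longrightarrow>
     aca_base (Eq (Fn (PComp f gs) (vars m)) (Fn f (map (\<lambda>g. Fn g (vars m)) gs)))"
| rec0: "arity_ok (PRec g h) (Suc n) \<Longrightarrow>
     aca_base (Eq (Fn (PRec g h) (zero # vars n)) (Fn g (vars n)))"
| recS: "arity_ok (PRec g h) (Suc n) \<Longrightarrow>
     aca_base (Eq (Fn (PRec g h) (succ (Var n) # vars n))
                  (Fn h (Var n # Fn (PRec g h) (Var n # vars n) # vars n)))"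
| set_induct: "aca_base (Imp (And (Mem zero 0) (All (Imp (Mem (Var 0) 0) (Mem (succ (Var 0)) 0))))
                        (All (Mem (Var 0) 0)))"
| compr: "arith p \<Longrightarrow> aca_base (SEx (All (Iff (Mem (Var 0) 0) (liftS 0 p))))"

definition ACA0 :: "fm set" where
  "ACA0 = {c. \<exists>p n m. aca_base p \<and> c = (All ^^ n) ((SAll ^^ m) p) \<and> sentence c}"

definition prel :: "prc \<Rightarrow> nat rel" where
  "prel a = {(y, x). peval a [y, x] \<noteq> 0}"

definition pr_wellorder :: "prc \<Rightarrow> bool" where
  "pr_wellorder a \<longleftrightarrow> arity_ok a 2 \<and> strict_linear_order_on (Field (prel a)) (prel a) \<and> wf (prel a)"

text \<open>otyp(a) < otyp(b), compared via the library's strict embedding order on well-orders.\<close>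
definition otyp_less :: "prc \<Rightarrow> prc \<Rightarrow> bool" where
  "otyp_less a b \<longleftrightarrow>
     (prel a \<union> Id_on (Field (prel a)), prel b \<union> Id_on (Field (prel b))) \<in> ordLess"

text \<open>y < x is rendered as  peval a [y,x] ~= 0,  i.e. Neg (Eq (Fn a [y,x]) zero).\<close>
definition prec :: "prc \<Rightarrow> trm \<Rightarrow> trm \<Rightarrow> fm" where
  "prec a y x = Neg (Eq (Fn a [y, x]) zero)"

text \<open>WF(a) = AX X (EX x. x:X --> EX x. x:X & AX y. y:X --> ~ y < x).\<close>
definition WF :: "prc \<Rightarrow> fm" where
  "WF a = SAll (Imp (Ex (Mem (Var 0) 0))
                    (Ex (And (Mem (Var 0) 0)
                             (All (Imp (Mem (Var 0) 0) (Neg (prec a (Var 0) (Var 1))))))))"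

text \<open>otyp(a) < |T|_WF, where |T|_WF is the supremum of the order types of the
  primitive recursive well-orderings b with T |- WF(b).\<close>
definition below_WF_ordinal :: "prc \<Rightarrow> fm set \<Rightarrow> bool" where
  "below_WF_ordinal a T \<longleftrightarrow> (\<exists>b. pr_wellorder b \<and> prv T (WF b) \<and> otyp_less a b)"

definition prv_sigma11 :: "fm set \<Rightarrow> fm \<Rightarrow> bool" where
  "prv_sigma11 T p \<longleftrightarrow> (\<exists>\<psi>. sentence \<psi> \<and> sigma11 \<psi> \<and> std_true \<psi> \<and> prv (insert \<psi> T) p)"

end

theory Submission
  imports Defs "HOL-Library.Nat_Bijection"
begin


lemma prv_mono: "prv H p \<Longrightarrow> H \<subseteq> H' \<Longrightarrow> prv H' p"
  by (induction rule: prv.induct) (auto intro: prv.intros)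

inductive prv0 :: "fm set \<Rightarrow> fm set \<Rightarrow> fm \<Rightarrow> bool" for K H where
  p_hyp: "q \<in> K \<Longrightarrow> prv0 K H q"
| p_thm: "prv H q \<Longrightarrow> prv0 K H q"
| p_mp: "prv0 K H (Imp a b) \<Longrightarrow> prv0 K H a \<Longrightarrow> prv0 K H b"

lemma imp_refl: "prv H (Imp p p)"
proof -
  have 1: "prv H (Imp (Imp p (Imp (Imp p p) p)) (Imp (Imp p (Imp p p)) (Imp p p)))" by (rule prv.ax2)
  have 2: "prv H (Imp p (Imp (Imp p p) p))" by (rule prv.ax1)
  have 3: "prv H (Imp p (Imp p p))" by (rule prv.ax1)
  show ?thesis using prv.mp[OF prv.mp[OF 1 2] 3] .
qed

lemma DT: "prv0 (insert p K) H q \<Longrightarrow> prv0 K H (Imp p q)"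
proof (induction rule: prv0.induct)
  case (p_hyp q)
  show ?case
  proof (cases "q = p")
    case True then show ?thesis using imp_refl[of H p] by (intro prv0.p_thm) simp
  next
    case False
    then have "q \<in> K" using p_hyp by simp
    then have "prv0 K H q" by (rule prv0.p_hyp)
    moreover have "prv0 K H (Imp q (Imp p q))" by (rule prv0.p_thm, rule prv.ax1)
    ultimately show ?thesis by (metis prv0.p_mp)
  qed
next
  case (p_thm q)
  then have "prv0 K H q" by (rule prv0.p_thm)
  moreover have "prv0 K H (Imp q (Imp p q))" by (rule prv0.p_thm, rule prv.ax1)
  ultimately show ?case by (metis prv0.p_mp)
next
  case (p_mp a b)
  show ?case by (rule prv0.p_mp[OF prv0.p_mp[OF prv0.p_thm[OF prv.ax2] p_mp.IH(1)] p_mp.IH(2)])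
qed

lemma p_mono: "prv0 K H q \<Longrightarrow> K \<subseteq> K' \<Longrightarrow> prv0 K' H q"
  by (induction rule: prv0.induct) (auto intro: prv0.intros)

lemma p_sound: "prv0 {} H q \<Longrightarrow> prv H q"
  by (induction rule: prv0.induct) (auto intro: prv.intros)

definition pd :: "fm list \<Rightarrow> fm set \<Rightarrow> fm \<Rightarrow> bool" where
  "pd G H q \<longleftrightarrow> prv0 (set G) H q"

lemma pd_hyp: "g \<in> set G \<Longrightarrow> pd G H g" unfolding pd_def by (rule prv0.p_hyp)
lemma pd_thm: "prv H q \<Longrightarrow> pd G H q" unfolding pd_def by (rule prv0.p_thm)
lemma pd_mp: "pd G H (Imp a b) \<Longrightarrow> pd G H a \<Longrightarrow> pd G H b" unfolding pd_def by (rule p_mp)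
lemma pd_impI: "pd (a # G) H b \<Longrightarrow> pd G H (Imp a b)" unfolding pd_def by (rule DT) simp
lemma pd_weak: "pd G H q \<Longrightarrow> set G \<subseteq> set G' \<Longrightarrow> pd G' H q" unfolding pd_def by (rule p_mono)
lemma pd_sound: "pd [] H q \<Longrightarrow> prv H q" unfolding pd_def by (rule p_sound) simp
lemma pd_cut: "pd G H q \<Longrightarrow> pd (q # G) H r \<Longrightarrow> pd G H r"
  using pd_mp pd_impI by blast

lemma pd_ccontr: "pd (Neg q # G) H Fls \<Longrightarrow> pd G H q"
proof -
  assume "pd (Neg q # G) H Fls"
  then have "pd G H (Imp (Neg q) Fls)" by (rule pd_impI)
  then have "pd G H (Neg (Neg q))" by (simp add: Neg_def)
  then show ?thesis by (rule pd_mp[OF pd_thm[OF prv.ax3]])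
qed
lemma pd_negI: "pd (a # G) H Fls \<Longrightarrow> pd G H (Neg a)" unfolding Neg_def by (rule pd_impI)
lemma pd_negE: "pd G H (Neg a) \<Longrightarrow> pd G H a \<Longrightarrow> pd G H Fls" unfolding Neg_def by (rule pd_mp)
lemma pd_FlsE: "pd G H Fls \<Longrightarrow> pd G H q"
  by (rule pd_ccontr, erule pd_weak) auto

lemma pd_andI: "pd G H p \<Longrightarrow> pd G H q \<Longrightarrow> pd G H (And p q)"
  unfolding And_def
  apply (rule pd_negI)
  apply (rule pd_negE[where a=q])
   apply (rule pd_mp[where a=p])
    apply (rule pd_hyp, simp)
   apply (erule pd_weak, force)
  apply (erule pd_weak, force)
  done

lemma pd_andE1: "pd G H (And p q) \<Longrightarrow> pd G H p"
  unfolding And_def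
  apply (rule pd_ccontr)
  apply (rule pd_negE[where a="Imp p (Neg q)"])
   apply (erule pd_weak, force)
  apply (rule pd_impI)
  apply (rule pd_FlsE)
  apply (rule pd_negE[where a=p])
   apply (rule pd_hyp, simp)
  apply (rule pd_hyp, simp)
  done

lemma pd_andE2: "pd G H (And p q) \<Longrightarrow> pd G H q"
  unfolding And_def
  apply (rule pd_ccontr)
  apply (rule pd_negE[where a="Imp p (Neg q)"])
   apply (erule pd_weak, force)
  apply (rule pd_impI)
  apply (rule pd_hyp, simp)
  done

lemma pd_iffE1: "pd G H (Iff p q) \<Longrightarrow> pd G H p \<Longrightarrow> pd G H q"
  unfolding Iff_def using pd_andE1 pd_mp by blast
lemma pd_iffE2: "pd G H (Iff p q) \<Longrightarrow> pd G H q \<Longrightarrow> pd G H p"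
  unfolding Iff_def using pd_andE2 pd_mp by blast

fun imps :: "fm list \<Rightarrow> fm \<Rightarrow> fm" where
  "imps [] q = q"
| "imps (g # G) q = Imp g (imps G q)"

lemma pd_imps: "pd (G @ G') H q \<Longrightarrow> pd G' H (imps G q)"
proof (induction G arbitrary: G')
  case Nil then show ?case by simp
next
  case (Cons g G)
  have "pd (G @ (g # G')) H q" using Cons.prems by (rule pd_weak) auto
  then have "pd (g # G') H (imps G q)" by (rule Cons.IH)
  then show ?case by (simp add: pd_impI)
qed

lemma pd_imps_E: "pd G' H (imps G q) \<Longrightarrow> set G \<subseteq> set G' \<Longrightarrow> pd G' H q"
proof (induction G)
  case Nil then show ?case by simp
next
  case (Cons g G)
  have "pd G' H (imps G q)"
    using pd_mp[OF Cons.prems(1)[simplified] pd_hyp] Cons.prems(2) by simp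
  then show ?case by (rule Cons.IH) (use Cons.prems(2) in simp)
qed

lemma liftf_imps: "liftf k (imps G q) = imps (map (liftf k) G) (liftf k q)"
  by (induction G) auto
lemma liftS_imps: "liftS k (imps G q) = imps (map (liftS k) G) (liftS k q)"
  by (induction G) auto

lemma pd_all_aux: "pd G' H (All (imps (map (liftf 0) G) B)) \<Longrightarrow> set G \<subseteq> set G' \<Longrightarrow> pd G' H (All B)"
proof (induction G)
  case Nil then show ?case by simp
next
  case (Cons g G)
  have "pd G' H (Imp g (All (imps (map (liftf 0) G) B)))"
    using pd_mp[OF pd_thm[OF prv.all_dist] Cons.prems(1)[simplified]] .
  then have "pd G' H (All (imps (map (liftf 0) G) B))"
    by (rule pd_mp[OF _ pd_hyp]) (use Cons.prems(2) in simp)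
  then show ?case by (rule Cons.IH) (use Cons.prems(2) in simp)
qed

lemma pd_allI: "pd G' H B \<Longrightarrow> map (liftf 0) G = G' \<Longrightarrow> pd G H (All B)"
proof -
  assume a: "pd G' H B" "map (liftf 0) G = G'"
  have "prv H (imps (map (liftf 0) G) B)"
    using a by (intro pd_sound pd_imps) simp
  then have "pd G H (All (imps (map (liftf 0) G) B))" by (intro pd_thm prv.gen)
  then show ?thesis by (rule pd_all_aux) simp
qed

lemma pd_sall_aux: "pd G' H (SAll (imps (map (liftS 0) G) B)) \<Longrightarrow> set G \<subseteq> set G' \<Longrightarrow> pd G' H (SAll B)"
proof (induction G)
  case Nil then show ?case by simp
next
  case (Cons g G)
  have "pd G' H (Imp g (SAll (imps (map (liftS 0) G) B)))"
    using pd_mp[OF pd_thm[OF prv.sall_dist] Cons.prems(1)[simplified]] .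
  then have "pd G' H (SAll (imps (map (liftS 0) G) B))"
    by (rule pd_mp[OF _ pd_hyp]) (use Cons.prems(2) in simp)
  then show ?case by (rule Cons.IH) (use Cons.prems(2) in simp)
qed

lemma pd_sallI: "pd G' H B \<Longrightarrow> map (liftS 0) G = G' \<Longrightarrow> pd G H (SAll B)"
proof -
  assume a: "pd G' H B" "map (liftS 0) G = G'"
  have "prv H (imps (map (liftS 0) G) B)"
    using a by (intro pd_sound pd_imps) simp
  then have "pd G H (SAll (imps (map (liftS 0) G) B))" by (intro pd_thm prv.sgen)
  then show ?thesis by (rule pd_sall_aux) simp
qed

lemma pd_allE: "pd G H (All B) \<Longrightarrow> substf 0 t B = C \<Longrightarrow> pd G H C"
  by (drule pd_mp[OF pd_thm[OF prv.all_inst[where t=t]]]) simp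
lemma pd_sallE: "pd G H (SAll B) \<Longrightarrow> substS 0 j B = C \<Longrightarrow> pd G H C"
  by (drule pd_mp[OF pd_thm[OF prv.sall_inst[where j=j]]]) simp

lemma pd_exI: "pd G H C \<Longrightarrow> substf 0 t B = C \<Longrightarrow> pd G H (Ex B)"
  unfolding Ex_def
  apply (rule pd_negI)
  apply (rule pd_negE[where a=C])
   apply (rule pd_allE[where t=t and B="Neg B"])
    apply (rule pd_hyp, simp)
   apply (simp add: Neg_def)
  apply (erule pd_weak, force)
  done

lemma pd_exE: "pd G H (Ex B) \<Longrightarrow> pd G' H C' \<Longrightarrow> B # map (liftf 0) G = G' \<Longrightarrow> liftf 0 C = C' \<Longrightarrow> pd G H C"
proof -
  assume e: "pd G H (Ex B)" and p: "pd G' H C'" and g: "B # map (liftf 0) G = G'" and c: "liftf 0 C = C'"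
  define R where "R = imps G C"
  have "prv H (imps G' C')" using p by (intro pd_sound pd_imps) simp
  then have 1: "prv H (Imp B (liftf 0 R))" unfolding g[symmetric] c[symmetric] by (simp add: R_def liftf_imps)
  have "pd [] H (Imp (liftf 0 (Neg R)) (Neg B))"
    apply (simp add: Neg_def)
    apply (rule pd_impI, rule pd_impI)
    apply (rule pd_mp[where a="liftf 0 R"], rule pd_hyp, simp)
    apply (rule pd_mp[OF pd_thm[OF 1]], rule pd_hyp, simp)
    done
  then have "prv H (All (Imp (liftf 0 (Neg R)) (Neg B)))" by (intro prv.gen pd_sound)
  then have 2: "prv H (Imp (Neg R) (All (Neg B)))" by (rule prv.mp[OF prv.all_dist])
  show ?thesis
    apply (rule pd_ccontr)
    apply (rule pd_negE[where a="All (Neg B)"])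
     apply (rule pd_weak[OF e[unfolded Ex_def]], force)
    apply (rule pd_mp[OF pd_thm[OF 2]])
    apply (rule pd_negI)
    apply (rule pd_negE[where a=C], rule pd_hyp, simp)
    apply (rule pd_imps_E[where G=G])
     apply (rule pd_hyp, simp add: R_def)
    apply force
    done
qed

lemma pd_sexE: "pd G H (SEx B) \<Longrightarrow> pd G' H C' \<Longrightarrow> B # map (liftS 0) G = G' \<Longrightarrow> liftS 0 C = C' \<Longrightarrow> pd G H C"
proof -
  assume e: "pd G H (SEx B)" and p: "pd G' H C'" and g: "B # map (liftS 0) G = G'" and c: "liftS 0 C = C'"
  define R where "R = imps G C"
  have "prv H (imps G' C')" using p by (intro pd_sound pd_imps) simp
  then have 1: "prv H (Imp B (liftS 0 R))" unfolding g[symmetric] c[symmetric] by (simp add: R_def liftS_imps)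
  have "pd [] H (Imp (liftS 0 (Neg R)) (Neg B))"
    apply (simp add: Neg_def)
    apply (rule pd_impI, rule pd_impI)
    apply (rule pd_mp[where a="liftS 0 R"], rule pd_hyp, simp)
    apply (rule pd_mp[OF pd_thm[OF 1]], rule pd_hyp, simp)
    done
  then have "prv H (SAll (Imp (liftS 0 (Neg R)) (Neg B)))" by (intro prv.sgen pd_sound)
  then have 2: "prv H (Imp (Neg R) (SAll (Neg B)))" by (rule prv.mp[OF prv.sall_dist])
  show ?thesis
    apply (rule pd_ccontr)
    apply (rule pd_negE[where a="SAll (Neg B)"])
     apply (rule pd_weak[OF e[unfolded SEx_def]], force)
    apply (rule pd_mp[OF pd_thm[OF 2]])
    apply (rule pd_negI)
    apply (rule pd_negE[where a=C], rule pd_hyp, simp)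
    apply (rule pd_imps_E[where G=G])
     apply (rule pd_hyp, simp add: R_def)
    apply force
    done
qed




lemma zero_lift[simp]: "liftt k zero = zero" "substt k s zero = zero" by (simp_all add: zero_def)

lemma conn_liftf[simp]:
  "liftf k (Neg p) = Neg (liftf k p)"
  "liftf k (And p q) = And (liftf k p) (liftf k q)"
  "liftf k (Iff p q) = Iff (liftf k p) (liftf k q)"
  "liftf k (Ex p) = Ex (liftf (Suc k) p)"
  "liftf k (SEx p) = SEx (liftf k p)"
  "liftf k (prec a y x) = prec a (liftt k y) (liftt k x)"
  by (simp_all add: Neg_def And_def Iff_def Ex_def SEx_def prec_def)

lemma conn_liftS[simp]:
  "liftS k (Neg p) = Neg (liftS k p)"
  "liftS k (And p q) = And (liftS k p) (liftS k q)"
  "liftS k (Iff p q) = Iff (liftS k p) (liftS k q)"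
  "liftS k (Ex p) = Ex (liftS k p)"
  "liftS k (SEx p) = SEx (liftS (Suc k) p)"
  "liftS k (prec a y x) = prec a y x"
  by (simp_all add: Neg_def And_def Iff_def Ex_def SEx_def prec_def)

lemma conn_substf[simp]:
  "substf k s (Neg p) = Neg (substf k s p)"
  "substf k s (And p q) = And (substf k s p) (substf k s q)"
  "substf k s (Iff p q) = Iff (substf k s p) (substf k s q)"
  "substf k s (Ex p) = Ex (substf (Suc k) (liftt 0 s) p)"
  "substf k s (SEx p) = SEx (substf k s p)"
  "substf k s (prec a y x) = prec a (substt k s y) (substt k s x)"
  by (simp_all add: Neg_def And_def Iff_def Ex_def SEx_def prec_def)

lemma conn_substS[simp]:
  "substS k j (Neg p) = Neg (substS k j p)"
  "substS k j (And p q) = And (substS k j p) (substS k j q)"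
  "substS k j (Iff p q) = Iff (substS k j p) (substS k j q)"
  "substS k j (Ex p) = Ex (substS k j p)"
  "substS k j (SEx p) = SEx (substS (Suc k) (Suc j) p)"
  "substS k j (prec a y x) = prec a y x"
  by (simp_all add: Neg_def And_def Iff_def Ex_def SEx_def prec_def)

definition PADD where "PADD = PRec (PProj 1 0) (PComp PSucc [PProj 3 1])"
definition PTRI where "PTRI = PRec PZero (PComp PADD [PProj 2 1, PComp PSucc [PProj 2 0]])"
definition PP where "PP = PComp PADD [PComp PTRI [PComp PADD [PProj 2 0, PProj 2 1]], PProj 2 0]"

lemma peval_PADD[simp]: "peval PADD [x, y] = x + y"
  by (induction x) (simp_all add: PADD_def)
lemma peval_PTRI[simp]: "peval PTRI [k] = triangle k"
  by (induction k) (simp_all add: PTRI_def)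
lemma peval_PP[simp]: "peval PP [n, m] = prod_encode (n, m)"
  by (simp add: PP_def prod_encode_def)

abbreviation "TOT k \<equiv> All (Ex (Mem (Fn PP [Var 1, Var 0]) k))"
abbreviation "MON a b k \<equiv> All (All (All (All (Imp (Mem (Fn PP [Var 3, Var 1]) k)
   (Imp (Mem (Fn PP [Var 2, Var 0]) k) (Imp (prec a (Var 3) (Var 2)) (prec b (Var 1) (Var 0))))))))"
abbreviation "MINF a k \<equiv> And (Mem (Var 0) k) (All (Imp (Mem (Var 0) k) (Neg (prec a (Var 0) (Var 1)))))"
abbreviation "DZ \<equiv> All (Iff (Mem (Var 0) 0) (Ex (And (Mem (Var 0) 1) (Mem (Fn PP [Var 0, Var 1]) 2))))"

definition PSI :: "prc \<Rightarrow> prc \<Rightarrow> fm" where "PSI a b = SEx (And (TOT 0) (MON a b 0))"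



declare eval_nat_numeral[simp]

lemma main_deriv:
  assumes psi: "PSI a b \<in> H" and wfb: "prv H (WF b)" and cmp: "prv H (SAll (SAll (SEx DZ)))"
  shows "prv H (WF a)"
proof -
  let ?G1 = "[And (TOT 0) (MON a b 0)]"
  let ?G2 = "[And (TOT 1) (MON a b 1)]"
  let ?G3 = "Ex (Mem (Var 0) 0) # ?G2"
  let ?G4 = "Neg (Ex (MINF a 0)) # ?G3"
  let ?G4' = "MON a b 1 # TOT 1 # ?G4"
  let ?G5 = "[DZ, MON a b 2, TOT 2, Neg (Ex (MINF a 1)), Ex (Mem (Var 0) 1), And (TOT 2) (MON a b 2)]"
  let ?G6 = "Mem (Var 0) 1 # ?G5"
  let ?G7 = "Mem (Fn PP [Var 1, Var 0]) 2 # Mem (Var 1) 1 # ?G5"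
  let ?G8 = "MINF b 0 # ?G5"
  let ?G9 = "[And (Mem (Var 0) 1) (Mem (Fn PP [Var 0, Var 1]) 2),
              And (Mem (Var 1) 0) (All (Imp (Mem (Var 0) 0) (Neg (prec b (Var 0) (Var 2)))))] @ ?G5"
  let ?G10 = "[And (Mem (Var 1) 1) (Mem (Fn PP [Var 1, Var 2]) 2),
              And (Mem (Var 2) 0) (All (Imp (Mem (Var 0) 0) (Neg (prec b (Var 0) (Var 3)))))] @ ?G5"
  let ?G12 = "prec a (Var 0) (Var 1) # Mem (Var 0) 1 # ?G10"
  let ?G13 = "[Mem (Fn PP [Var 1, Var 0]) 2, prec a (Var 1) (Var 2), Mem (Var 1) 1,
              And (Mem (Var 2) 1) (Mem (Fn PP [Var 2, Var 3]) 2),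
              And (Mem (Var 3) 0) (All (Imp (Mem (Var 0) 0) (Neg (prec b (Var 0) (Var 4)))))] @ ?G5"
  let ?EZ = "Ex (And (Mem (Var 0) 1) (Mem (Fn PP [Var 0, Var 1]) 2))"

  have h14: "pd ?G13 H Fls"
  proof -
    have m0: "pd ?G13 H (MON a b 2)" by (rule pd_hyp) simp
    have m1: "pd ?G13 H (All(All(All(Imp (Mem (Fn PP [Var 4, Var 1]) 2) (Imp (Mem (Fn PP [Var 2, Var 0]) 2) (Imp (prec a (Var 4) (Var 2)) (prec b (Var 1) (Var 0))))))))"
      by (rule pd_allE[OF m0, where t="Var 1"]) simp
    have m2: "pd ?G13 H (All(All(Imp (Mem (Fn PP [Var 3, Var 1]) 2) (Imp (Mem (Fn PP [Var 4, Var 0]) 2) (Imp (prec a (Var 3) (Var 4)) (prec b (Var 1) (Var 0)))))))"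
      by (rule pd_allE[OF m1, where t="Var 2"]) simp
    have m3: "pd ?G13 H (All(Imp (Mem (Fn PP [Var 2, Var 1]) 2) (Imp (Mem (Fn PP [Var 3, Var 0]) 2) (Imp (prec a (Var 2) (Var 3)) (prec b (Var 1) (Var 0))))))"
      by (rule pd_allE[OF m2, where t="Var 0"]) simp
    have m4: "pd ?G13 H (Imp (Mem (Fn PP [Var 1, Var 0]) 2) (Imp (Mem (Fn PP [Var 2, Var 3]) 2) (Imp (prec a (Var 1) (Var 2)) (prec b (Var 0) (Var 3)))))"
      by (rule pd_allE[OF m3, where t="Var 3"]) simp
    have x1: "pd ?G13 H (Mem (Fn PP [Var 1, Var 0]) 2)" by (rule pd_hyp) simp
    have x2: "pd ?G13 H (Mem (Fn PP [Var 2, Var 3]) 2)"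
      by (rule pd_andE2[where p="Mem (Var 2) 1"], rule pd_hyp) simp
    have x3: "pd ?G13 H (prec a (Var 1) (Var 2))" by (rule pd_hyp) simp
    have pb: "pd ?G13 H (prec b (Var 0) (Var 3))"
      by (rule pd_mp[OF pd_mp[OF pd_mp[OF m4 x1] x2] x3])
    have n0: "pd ?G13 H (All (Imp (Mem (Var 0) 0) (Neg (prec b (Var 0) (Var 4)))))"
      by (rule pd_andE2[where p="Mem (Var 3) 0"], rule pd_hyp) simp
    have nb: "pd ?G13 H (Imp (Mem (Var 0) 0) (Neg (prec b (Var 0) (Var 3))))"
      by (rule pd_allE[OF n0, where t="Var 0"]) simp
    have dz: "pd ?G13 H (Iff (Mem (Var 0) 0) ?EZ)"
      by (rule pd_allE[OF pd_hyp[of DZ], where t="Var 0"]) simp_all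
    have ez: "pd ?G13 H ?EZ"
      by (rule pd_exI[where t="Var 1" and C="And (Mem (Var 1) 1) (Mem (Fn PP [Var 1, Var 0]) 2)"], rule pd_andI, (rule pd_hyp, simp)+) simp
    have uz: "pd ?G13 H (Mem (Var 0) 0)" by (rule pd_iffE2[OF dz ez])
    show ?thesis by (rule pd_negE[OF pd_mp[OF nb uz] pb])
  qed
  have h13: "pd ?G12 H Fls"
  proof -
    have t: "pd ?G12 H (TOT 2)" by (rule pd_hyp) simp
    have "pd ?G12 H (Ex (Mem (Fn PP [Var 1, Var 0]) 2))"
      by (rule pd_allE[OF t, where t="Var 0"]) simp
    then show ?thesis by (rule pd_exE[OF _ h14]) simp_all
  qed
  have h12: "pd ?G10 H (Imp (Mem (Var 0) 1) (Neg (prec a (Var 0) (Var 1))))"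
    by (rule pd_impI, rule pd_negI, rule h13)
  have h11: "pd ?G9 H Fls"
  proof -
    have "pd ?G9 H (MINF a 1)"
      by (rule pd_andI, rule pd_andE1[where q="Mem (Fn PP [Var 0, Var 1]) 2"], rule pd_hyp, simp, rule pd_allI[OF h12]) simp
    then have ex: "pd ?G9 H (Ex (MINF a 1))" by (rule pd_exI[where t="Var 0"]) simp
    have ng: "pd ?G9 H (Neg (Ex (MINF a 1)))" by (rule pd_hyp) simp
    show ?thesis by (rule pd_negE[OF ng ex])
  qed
  have h10: "pd ?G8 H Fls"
  proof -
    have m1: "pd ?G8 H (Iff (Mem (Var 0) 0) ?EZ)"
      by (rule pd_allE[OF pd_hyp[of DZ], where t="Var 0"]) simp_all
    have m2: "pd ?G8 H (Mem (Var 0) 0)" by (rule pd_andE1[where q="All (Imp (Mem (Var 0) 0) (Neg (prec b (Var 0) (Var 1))))"], rule pd_hyp) simp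
    have "pd ?G8 H ?EZ" by (rule pd_iffE1[OF m1 m2])
    then show ?thesis by (rule pd_exE[OF _ h11]) simp_all
  qed
  have h9: "pd ?G7 H (Mem (Var 0) 0)"
  proof -
    have m1: "pd ?G7 H (Iff (Mem (Var 0) 0) ?EZ)"
      by (rule pd_allE[OF pd_hyp[of DZ], where t="Var 0"]) simp_all
    have "pd ?G7 H ?EZ"
      by (rule pd_exI[where t="Var 1" and C="And (Mem (Var 1) 1) (Mem (Fn PP [Var 1, Var 0]) 2)"], rule pd_andI, (rule pd_hyp, simp)+) simp
    then show ?thesis by (rule pd_iffE2[OF m1])
  qed
  have h8: "pd ?G7 H (Ex (Mem (Var 0) 0))" by (rule pd_exI[OF h9, where t="Var 0"]) simp
  have h7: "pd ?G6 H (Ex (Mem (Var 0) 0))"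
  proof -
    have t: "pd ?G6 H (TOT 2)" by (rule pd_hyp) simp
    have "pd ?G6 H (Ex (Mem (Fn PP [Var 1, Var 0]) 2))"
      by (rule pd_allE[OF t, where t="Var 0"]) simp
    then show ?thesis by (rule pd_exE[OF _ h8]) simp_all
  qed
  have h6: "pd ?G5 H Fls"
  proof -
    have nez: "pd ?G5 H (Ex (Mem (Var 0) 0))"
      by (rule pd_exE[OF pd_hyp h7]) simp_all
    have wfz: "pd ?G5 H (Imp (Ex (Mem (Var 0) 0)) (Ex (MINF b 0)))"
      by (rule pd_sallE[OF pd_thm[OF wfb[unfolded WF_def]], where j=0]) simp
    have "pd ?G5 H (Ex (MINF b 0))" by (rule pd_mp[OF wfz nez])
    then show ?thesis by (rule pd_exE[OF _ h10]) simp_all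
  qed
  have h5: "pd ?G4' H Fls"
  proof -
    have c0: "pd ?G4' H (SAll (SAll (SEx DZ)))" by (rule pd_thm[OF cmp])
    have c1: "pd ?G4' H (SAll (substS 1 2 (SEx DZ)))" by (rule pd_sallE[OF c0, where j=1]) simp
    have c2: "pd ?G4' H (SEx DZ)" by (rule pd_sallE[OF c1, where j=0]) simp
    show ?thesis by (rule pd_sexE[OF c2 h6]) simp_all
  qed
  have h4: "pd ?G4 H Fls"
  proof -
    have t: "pd ?G4 H (TOT 1)" by (rule pd_andE1[where q="MON a b 1"], rule pd_hyp) simp
    have m: "pd (TOT 1 # ?G4) H (MON a b 1)" by (rule pd_andE2[where p="TOT 1"], rule pd_hyp) simp
    show ?thesis by (rule pd_cut[OF t pd_cut[OF m h5]])
  qed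
  have h2: "pd ?G2 H (Imp (Ex (Mem (Var 0) 0)) (Ex (MINF a 0)))"
    by (rule pd_impI, rule pd_ccontr, rule h4)
  have h1: "pd ?G1 H (WF a)" unfolding WF_def by (rule pd_sallI[OF h2]) simp
  have s0: "pd [] H (SEx (And (TOT 0) (MON a b 0)))"
    using psi unfolding PSI_def by (intro pd_thm prv.hyp)
  have "pd [] H (WF a)" by (rule pd_sexE[OF s0 h1]) (simp_all add: WF_def)
  then show ?thesis by (rule pd_sound)
qed




lemma sat_conn[simp]:
  "sat e S (Neg p) = (\<not> sat e S p)"
  "sat e S (And p q) = (sat e S p \<and> sat e S q)"
  "sat e S (Iff p q) = (sat e S p = sat e S q)"
  "sat e S (Ex p) = (\<exists>n. sat (case_nat n e) S p)"
  "sat e S (SEx p) = (\<exists>X. sat e (case_nat X S) p)"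
  "sat e S (prec a y x) = (peval a [evt e y, evt e x] \<noteq> 0)"
  by (auto simp: Neg_def And_def Iff_def Ex_def SEx_def prec_def zero_def)

theorem mainTheorem6:
  fixes T :: "fm set" and a :: prc
  assumes "\<forall>p\<in>T. sentence p"
    and "\<forall>p\<in>ACA0. prv T p"
    and "pr_wellorder a"
    and "below_WF_ordinal a T"
  shows "prv_sigma11 T (WF a)"
proof -
  obtain b where b: "pr_wellorder b" "prv T (WF b)" "otyp_less a b"
    using assms(4) unfolding below_WF_ordinal_def by auto
  let ?ra = "prel a \<union> Id_on (Field (prel a))"
  let ?rb = "prel b \<union> Id_on (Field (prel b))"
  obtain f where wo: "Well_order ?ra" and em: "embed ?ra ?rb f"
    using b(3) unfolding otyp_less_def ordLess_def embedS_def by blast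
  have mono: "(f y, f x) \<in> prel b" if yx: "(y, x) \<in> prel a" for y x
  proof -
    have 1: "(f y, f x) \<in> ?rb" using embed_compat[OF em] yx unfolding compat_def by blast
    have "wf (prel a)" using assms(3) unfolding pr_wellorder_def by blast
    then have "y \<noteq> x" using yx by auto
    moreover have "x \<in> Field ?ra" "y \<in> Field ?ra" using yx by (auto simp: Field_def)
    ultimately have "f y \<noteq> f x" using embed_inj_on[OF wo em] unfolding inj_on_def by blast
    then show ?thesis using 1 by auto
  qed
  define X where "X = {prod_encode (n, f n) | n. True}"
  have st: "std_true (PSI a b)"
    unfolding std_true_def PSI_def
    apply simp
    apply (rule exI[of _ X])
    using mono by (auto simp: X_def prel_def)
  have sen: "sentence (PSI a b)"
    by (simp add: PSI_def sentence_def Neg_def And_def Ex_def SEx_def prec_def zero_def)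
  have sig: "sigma11 (PSI a b)"
    unfolding sigma11_def PSI_def
    by (rule exI[of _ 1], rule exI[of _ "And (TOT 0) (MON a b 0)"])
       (simp add: Neg_def And_def Ex_def prec_def)
  have ab: "aca_base (SEx (All (Iff (Mem (Var 0) 0) (liftS 0 (Ex (And (Mem (Var 0) 0) (Mem (Fn PP [Var 0, Var 1]) 1)))))))"
    by (rule aca_base.compr) (simp add: Neg_def And_def Ex_def)
  have "SAll (SAll (SEx DZ)) \<in> ACA0"
    unfolding ACA0_def
    apply (rule CollectI, rule exI[of _ "SEx DZ"], rule exI[of _ 0], rule exI[of _ 2])
    using ab by (simp add: sentence_def Neg_def And_def Iff_def Ex_def SEx_def)
  then have cmp: "prv (insert (PSI a b) T) (SAll (SAll (SEx DZ)))"
    using assms(2) prv_mono by blast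
  have wfb: "prv (insert (PSI a b) T) (WF b)" using b(2) prv_mono by blast
  have "prv (insert (PSI a b) T) (WF a)"
    by (rule main_deriv[OF _ wfb cmp]) simp
  then show ?thesis unfolding prv_sigma11_def using st sen sig by blast
qed


end
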